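(* Let $A$ be a sequence algebra. If a normed $A$-module $X$ is essential and homogeneous, then its completion $\overline X$ is also essential and homogeneous.
   Context: Modules are contractive ($\|a\cdot x\|\le\|a\|\|x\|$); the completion carries the continuously extended action. A sequence algebra is a normed algebra of complex sequences with coordinatewise operations containing $c_{00}$ as a dense subalgebra, with $\|\mathbf p^n\|=1$, where $\mathbf p^n$ has $1$ in place $n$ and $0$ elsewhere. For $x\in X$, $x_n:=\mathbf p^n\cdot x$. $X$ is essential if the closed linear span of $\{a\cdot x\}$ is $X$; homogeneous if $\|x_n\|\le\|y_n\|$ for all $n$ implies $\|x\|\le\|y\|$. *)

theory Defs
  imports "HOL-Analysis.Analysis"
begin

definition c00 :: "(nat \<Rightarrow> complex) set" where
  "c00 = {a. finite {n. a n \<noteq> 0}}"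

definition pvec :: "nat \<Rightarrow> nat \<Rightarrow> complex" where
  "pvec n = (\<lambda>k. if k = n then 1 else 0)"

definition seq_algebra :: "(nat \<Rightarrow> complex) set \<Rightarrow> ((nat \<Rightarrow> complex) \<Rightarrow> real) \<Rightarrow> bool" where
  "seq_algebra A nA \<longleftrightarrow>
     (\<forall>a\<in>A. \<forall>b\<in>A. (\<lambda>n. a n + b n) \<in> A \<and> (\<lambda>n. a n * b n) \<in> A) \<and>
     (\<forall>c. \<forall>a\<in>A. (\<lambda>n. c * a n) \<in> A) \<and>
     (\<forall>a\<in>A. 0 \<le> nA a \<and> (nA a = 0 \<longleftrightarrow> a = (\<lambda>n. 0))) \<and>
     (\<forall>a\<in>A. \<forall>b\<in>A. nA (\<lambda>n. a n + b n) \<le> nA a + nA b) \<and>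
     (\<forall>a\<in>A. \<forall>b\<in>A. nA (\<lambda>n. a n * b n) \<le> nA a * nA b) \<and>
     (\<forall>c. \<forall>a\<in>A. nA (\<lambda>n. c * a n) = norm c * nA a) \<and>
     c00 \<subseteq> A \<and>
     (\<forall>a\<in>A. \<forall>e>0. \<exists>b\<in>c00. nA (\<lambda>n. a n - b n) < e) \<and>
     (\<forall>n. nA (pvec n) = 1)"

text \<open>Complex scalar multiplication sm on a real normed vector space, compatible with
the real structure and the norm (i.e. a complex normed space).\<close>
definition complex_scaling :: "(complex \<Rightarrow> 'x::real_normed_vector \<Rightarrow> 'x) \<Rightarrow> bool" where
  "complex_scaling sm \<longleftrightarrow>
     (\<forall>c x y. sm c (x + y) = sm c x + sm c y) \<and>
     (\<forall>c d x. sm (c + d) x = sm c x + sm d x) \<and>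
     (\<forall>c d x. sm (c * d) x = sm c (sm d x)) \<and>
     (\<forall>r x. sm (complex_of_real r) x = r *\<^sub>R x) \<and>
     (\<forall>c x. norm (sm c x) = norm c * norm x)"

definition normed_module ::
  "(nat \<Rightarrow> complex) set \<Rightarrow> ((nat \<Rightarrow> complex) \<Rightarrow> real) \<Rightarrow>
   (complex \<Rightarrow> 'x::real_normed_vector \<Rightarrow> 'x) \<Rightarrow> ((nat \<Rightarrow> complex) \<Rightarrow> 'x \<Rightarrow> 'x) \<Rightarrow> bool" where
  "normed_module A nA sm act \<longleftrightarrow>
     complex_scaling sm \<and>
     (\<forall>a\<in>A. \<forall>x y. act a (x + y) = act a x + act a y) \<and>
     (\<forall>a\<in>A. \<forall>c x. act a (sm c x) = sm c (act a x)) \<and>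
     (\<forall>a\<in>A. \<forall>b\<in>A. \<forall>x. act (\<lambda>n. a n + b n) x = act a x + act b x) \<and>
     (\<forall>a\<in>A. \<forall>c x. act (\<lambda>n. c * a n) x = sm c (act a x)) \<and>
     (\<forall>a\<in>A. \<forall>b\<in>A. \<forall>x. act (\<lambda>n. a n * b n) x = act a (act b x)) \<and>
     (\<forall>a\<in>A. \<forall>x. norm (act a x) \<le> nA a * norm x)"

definition cspan :: "(complex \<Rightarrow> 'x::real_normed_vector \<Rightarrow> 'x) \<Rightarrow> 'x set \<Rightarrow> 'x set" where
  "cspan sm S = {x. \<exists>F c. finite F \<and> F \<subseteq> S \<and> x = (\<Sum>s\<in>F. sm (c s) s)}"

definition essential_module ::
  "(nat \<Rightarrow> complex) set \<Rightarrow> (complex \<Rightarrow> 'x::real_normed_vector \<Rightarrow> 'x) \<Rightarrow>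
   ((nat \<Rightarrow> complex) \<Rightarrow> 'x \<Rightarrow> 'x) \<Rightarrow> bool" where
  "essential_module A sm act \<longleftrightarrow>
     closure (cspan sm {act a x | a x. a \<in> A}) = UNIV"

definition homogeneous_module :: "((nat \<Rightarrow> complex) \<Rightarrow> 'x::real_normed_vector \<Rightarrow> 'x) \<Rightarrow> bool" where
  "homogeneous_module act \<longleftrightarrow>
     (\<forall>x y. (\<forall>n. norm (act (pvec n) x) \<le> norm (act (pvec n) y)) \<longrightarrow> norm x \<le> norm y)"

text \<open>Completions are unique
up to isometric isomorphism, so this characterises the completion.\<close>
definition module_completion ::
  "(nat \<Rightarrow> complex) set \<Rightarrow> ((nat \<Rightarrow> complex) \<Rightarrow> real) \<Rightarrow>
   (complex \<Rightarrow> 'x::real_normed_vector \<Rightarrow> 'x) \<Rightarrow> ((nat \<Rightarrow> complex) \<Rightarrow> 'x \<Rightarrow> 'x) \<Rightarrow>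
   (complex \<Rightarrow> 'y::banach \<Rightarrow> 'y) \<Rightarrow> ((nat \<Rightarrow> complex) \<Rightarrow> 'y \<Rightarrow> 'y) \<Rightarrow> ('x \<Rightarrow> 'y) \<Rightarrow> bool" where
  "module_completion A nA sm act smY actY J \<longleftrightarrow>
     normed_module A nA smY actY \<and>
     (\<forall>x y. J (x + y) = J x + J y) \<and>
     (\<forall>c x. J (sm c x) = smY c (J x)) \<and>
     (\<forall>x. norm (J x) = norm x) \<and>
     closure (range J) = UNIV \<and>
     (\<forall>a\<in>A. \<forall>x. actY a (J x) = J (act a x))"

end

theory Submission
  imports Defs
begin


definition indf :: "nat set \<Rightarrow> nat \<Rightarrow> complex" where
  "indf F = (\<lambda>n. if n \<in> F then 1 else 0)"

lemma frac_lt1: "(t::real) \<ge> 0 \<Longrightarrow> t / (t + 1) < 1"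
proof -
  assume "t \<ge> 0" hence "t + 1 > 0" by linarith
  thus ?thesis by (simp add: divide_less_eq)
qed

locale gm =
  fixes A :: "(nat \<Rightarrow> complex) set" and nA :: "(nat \<Rightarrow> complex) \<Rightarrow> real"
    and sm :: "complex \<Rightarrow> 'x::real_normed_vector \<Rightarrow> 'x"
    and act :: "(nat \<Rightarrow> complex) \<Rightarrow> 'x \<Rightarrow> 'x"
  assumes S: "seq_algebra A nA" and M: "normed_module A nA sm act"
begin

lemma indf_A: "finite F \<Longrightarrow> indf F \<in> A"
proof -
  assume "finite F"
  hence "indf F \<in> c00" unfolding c00_def indf_def
    by (auto elim: finite_subset[rotated])
  thus ?thesis using S unfolding seq_algebra_def by blast
qed

lemma pvec_eq: "pvec n = indf {n}" by (rule ext) (auto simp: pvec_def indf_def)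

lemma pvec_A: "pvec n \<in> A" using indf_A[of "{n}"] pvec_eq by simp

lemma nA_pvec: "nA (pvec n) = 1" using S unfolding seq_algebra_def by blast

lemma sm_real: "sm (complex_of_real r) x = r *\<^sub>R x"
  using M unfolding normed_module_def complex_scaling_def by (elim conjE) (rule spec, blast)

lemma sm_add: "sm c (x + y) = sm c x + sm c y"
  using M unfolding normed_module_def complex_scaling_def by (elim conjE) (rule spec, blast)

lemma sm_norm: "norm (sm c x) = norm c * norm x"
  using M unfolding normed_module_def complex_scaling_def by (elim conjE) (rule spec, blast)

lemma sm_diff: "sm c (x - y) = sm c x - sm c y"
  using sm_add[of c "x - y" y] by (simp add: algebra_simps)

lemma act_add: "a \<in> A \<Longrightarrow> act a (x + y) = act a x + act a y"
  using M unfolding normed_module_def by blast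

lemma act_zero: "a \<in> A \<Longrightarrow> act a 0 = 0"
  using act_add[of a 0 0] by simp

lemma act_diff: "a \<in> A \<Longrightarrow> act a (x - y) = act a x - act a y"
  using act_add[of a "x - y" y] by (simp add: algebra_simps)

lemma act_sm: "a \<in> A \<Longrightarrow> act a (sm c x) = sm c (act a x)"
  using M unfolding normed_module_def by blast

lemma act_scaleR: "a \<in> A \<Longrightarrow> act a (r *\<^sub>R x) = r *\<^sub>R act a x"
  using act_sm[of a "complex_of_real r" x] by (simp add: sm_real)

lemma act_cmult: "a \<in> A \<Longrightarrow> act (\<lambda>n. c * a n) x = sm c (act a x)"
  using M unfolding normed_module_def by blast

lemma act_zseq: "act (\<lambda>n. 0) x = 0"
proof -
  have "act (\<lambda>n. 0 * pvec 0 n) x = sm 0 (act (pvec 0) x)" using act_cmult pvec_A by blast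
  also have "\<dots> = 0" using sm_real[of 0] by simp
  finally show ?thesis by simp
qed

lemma act_mult: "a \<in> A \<Longrightarrow> b \<in> A \<Longrightarrow> act a (act b x) = act (\<lambda>n. a n * b n) x"
  using M unfolding normed_module_def by metis

lemma act_seq_add: "a \<in> A \<Longrightarrow> b \<in> A \<Longrightarrow> act (\<lambda>n. a n + b n) x = act a x + act b x"
  using M unfolding normed_module_def by blast

lemma act_norm: "a \<in> A \<Longrightarrow> norm (act a x) \<le> nA a * norm x"
  using M unfolding normed_module_def by blast

lemma nA_nonneg: "a \<in> A \<Longrightarrow> 0 \<le> nA a"
  using S unfolding seq_algebra_def by blast

lemma act_pvec_norm: "norm (act (pvec n) x) \<le> norm x"
  using act_norm[OF pvec_A, of n x] nA_pvec by simp

lemma seq_diff_A: "a \<in> A \<Longrightarrow> b \<in> A \<Longrightarrow> (\<lambda>n. a n - b n) \<in> A"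
proof -
  assume a: "a \<in> A" and b: "b \<in> A"
  have mb: "(\<lambda>n. (-1) * b n) \<in> A" using S b unfolding seq_algebra_def by blast
  have "\<forall>a\<in>A. \<forall>b\<in>A. (\<lambda>n. a n + b n) \<in> A" using S unfolding seq_algebra_def by blast
  hence "\<forall>b\<in>A. (\<lambda>n. a n + b n) \<in> A" using a by blast
  from bspec[OF this mb] have "(\<lambda>n. a n + (-1) * b n) \<in> A" by simp
  thus ?thesis by simp
qed

lemma act_seq_diff: "a \<in> A \<Longrightarrow> b \<in> A \<Longrightarrow> act (\<lambda>n. a n - b n) x = act a x - act b x"
proof -
  assume a: "a \<in> A" and b: "b \<in> A"
  have mb: "(\<lambda>n. (-1) * b n) \<in> A" using S b unfolding seq_algebra_def by blast
  have "act (\<lambda>n. a n - b n) x = act (\<lambda>n. a n + (-1) * b n) x" by simp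
  also have "\<dots> = act a x + act (\<lambda>n. (-1) * b n) x" using act_seq_add[OF a mb] .
  also have "act (\<lambda>n. (-1) * b n) x = sm (-1) (act b x)" using act_cmult[OF b] .
  also have "\<dots> = - act b x" using sm_real[of "-1"] by simp
  finally show ?thesis by simp
qed

lemma act_pvec_indf: "finite F \<Longrightarrow>
   act (pvec n) (act (indf F) x) = (if n \<in> F then act (pvec n) x else 0)"
proof -
  assume F: "finite F"
  have "act (pvec n) (act (indf F) x) = act (\<lambda>k. pvec n k * indf F k) x"
    using act_mult[OF pvec_A indf_A[OF F]] .
  moreover have "(\<lambda>k. pvec n k * indf F k) = (if n \<in> F then pvec n else (\<lambda>k. 0))"
    by (rule ext) (auto simp: pvec_def indf_def)
  ultimately show ?thesis by (simp add: act_zseq)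
qed

lemma act_indf_indf: "finite F \<Longrightarrow> finite G \<Longrightarrow>
   act (indf F) (act (indf G) x) = act (indf (F \<inter> G)) x"
proof -
  assume F: "finite F" and G: "finite G"
  have "act (indf F) (act (indf G) x) = act (\<lambda>k. indf F k * indf G k) x"
    using act_mult[OF indf_A[OF F] indf_A[OF G]] .
  moreover have "(\<lambda>k. indf F k * indf G k) = indf (F \<inter> G)"
    by (rule ext) (auto simp: indf_def)
  ultimately show ?thesis by simp
qed

lemma act_indf_sum: "finite H \<Longrightarrow> act (indf H) x = (\<Sum>n\<in>H. act (pvec n) x)"
proof (induction H rule: finite_induct)
  case empty
  have "indf {} = (\<lambda>n. 0)" by (rule ext) (simp add: indf_def)
  then show ?case by (simp add: act_zseq)
next
  case (insert n H)
  have "indf (insert n H) = (\<lambda>k. pvec n k + indf H k)"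
    using insert(2) by (intro ext) (auto simp: indf_def pvec_def)
  hence "act (indf (insert n H)) x = act (pvec n) x + act (indf H) x"
    using act_seq_add[OF pvec_A indf_A[OF insert(1)]] by simp
  then show ?case using insert by simp
qed

lemma norm_act_indf: "finite H \<Longrightarrow> norm (act (indf H) x) \<le> (\<Sum>n\<in>H. norm (act (pvec n) x))"
  using act_indf_sum norm_sum by metis

definition SS :: "'x set" where
  "SS = {x. \<forall>e>0. \<exists>x' F. finite F \<and> act (indf F) x' = x' \<and> norm (x - x') < e}"

lemma SS_gen: assumes a: "a \<in> A" shows "act a x \<in> SS"
  unfolding SS_def
proof (intro CollectI allI impI)
  fix e :: real assume e: "e > 0"
  have "e / (norm x + 1) > 0" using e by (intro divide_pos_pos) (auto intro: add_nonneg_pos)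
  then obtain b where b: "b \<in> c00" and nb: "nA (\<lambda>n. a n - b n) < e / (norm x + 1)"
    using S a unfolding seq_algebra_def by blast
  have bA: "b \<in> A" using b S unfolding seq_algebra_def by blast
  define F where "F = {n. b n \<noteq> 0}"
  have F: "finite F" using b unfolding c00_def F_def by simp
  have "act (indf F) (act b x) = act (\<lambda>n. indf F n * b n) x"
    using act_mult[OF indf_A[OF F] bA] .
  moreover have "(\<lambda>n. indf F n * b n) = b" by (rule ext) (auto simp: indf_def F_def)
  ultimately have supp: "act (indf F) (act b x) = act b x" by simp
  have "norm (act a x - act b x) = norm (act (\<lambda>n. a n - b n) x)"
    using act_seq_diff[OF a bA] by simp
  also have "\<dots> \<le> nA (\<lambda>n. a n - b n) * norm x" using act_norm[OF seq_diff_A[OF a bA]] .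
  also have "\<dots> \<le> e / (norm x + 1) * norm x" using nb by (intro mult_right_mono) auto
  also have "\<dots> < e"
  proof -
    have "e / (norm x + 1) * norm x = e * (norm x / (norm x + 1))" by simp
    also have "norm x / (norm x + 1) < 1" by (rule frac_lt1) simp
    hence "e * (norm x / (norm x + 1)) < e * 1" using e by (intro mult_strict_left_mono) auto
    finally show ?thesis by simp
  qed
  finally show "\<exists>x' F. finite F \<and> act (indf F) x' = x' \<and> norm (act a x - x') < e"
    using F supp by blast
qed

lemma SS_zero: "0 \<in> SS"
proof -
  have "act (indf {}) 0 = 0" using act_zero[OF indf_A[of "{}"]] by simp
  thus ?thesis unfolding SS_def by (intro CollectI allI impI exI[of _ 0] exI[of _ "{}"]) simp
qed

lemma supp_mono: "finite F \<Longrightarrow> finite G \<Longrightarrow> F \<subseteq> G \<Longrightarrow> act (indf F) x = x \<Longrightarrow> act (indf G) x = x"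
proof -
  assume F: "finite F" and G: "finite G" and sub: "F \<subseteq> G" and x: "act (indf F) x = x"
  have "act (indf G) x = act (indf G) (act (indf F) x)" using x by simp
  also have "\<dots> = act (indf (G \<inter> F)) x" using act_indf_indf[OF G F] .
  also have "G \<inter> F = F" using sub by blast
  finally show ?thesis using x by simp
qed

lemma SS_add: assumes x: "x \<in> SS" and y: "y \<in> SS" shows "x + y \<in> SS"
  unfolding SS_def
proof (intro CollectI allI impI)
  fix e :: real assume e: "e > 0"
  have e2: "e/2 > 0" using e by simp
  obtain x' F where F: "finite F" "act (indf F) x' = x'" "norm (x - x') < e/2"
    using x e2 unfolding SS_def by blast
  obtain y' G where G: "finite G" "act (indf G) y' = y'" "norm (y - y') < e/2"
    using y e2 unfolding SS_def by blast
  have FG: "finite (F \<union> G)" using F G by simp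
  have "act (indf (F \<union> G)) (x' + y') = act (indf (F \<union> G)) x' + act (indf (F \<union> G)) y'"
    using act_add[OF indf_A[OF FG]] .
  also have "act (indf (F \<union> G)) x' = x'" using supp_mono[OF F(1) FG _ F(2)] by blast
  also have "act (indf (F \<union> G)) y' = y'" using supp_mono[OF G(1) FG _ G(2)] by blast
  finally have s: "act (indf (F \<union> G)) (x' + y') = x' + y'" .
  have "(x + y) - (x' + y') = (x - x') + (y - y')" by (simp add: algebra_simps)
  hence "norm ((x + y) - (x' + y')) \<le> norm (x - x') + norm (y - y')"
    by (metis norm_triangle_ineq)
  hence "norm ((x + y) - (x' + y')) < e" using F(3) G(3) by linarith
  thus "\<exists>x' F. finite F \<and> act (indf F) x' = x' \<and> norm (x + y - x') < e"
    using FG s by blast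
qed

lemma SS_sm: assumes x: "x \<in> SS" shows "sm c x \<in> SS"
  unfolding SS_def
proof (intro CollectI allI impI)
  fix e :: real assume e: "e > 0"
  have "e / (norm c + 1) > 0" using e by (intro divide_pos_pos) (auto intro: add_nonneg_pos)
  then obtain x' F where F: "finite F" "act (indf F) x' = x'" "norm (x - x') < e / (norm c + 1)"
    using x unfolding SS_def by blast
  have "act (indf F) (sm c x') = sm c x'" using act_sm[OF indf_A[OF F(1)]] F(2) by simp
  moreover have "norm (sm c x - sm c x') < e"
  proof -
    have "norm (sm c x - sm c x') = norm c * norm (x - x')" by (simp only: sm_diff[symmetric] sm_norm)
    also have "\<dots> \<le> norm c * (e / (norm c + 1))" using F(3) by (intro mult_left_mono) auto
    also have "\<dots> = e * (norm c / (norm c + 1))" by simp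
    also have "\<dots> < e * 1" using e frac_lt1[of "norm c"] by (intro mult_strict_left_mono) auto
    finally show ?thesis by simp
  qed
  ultimately show "\<exists>x' F. finite F \<and> act (indf F) x' = x' \<and> norm (sm c x - x') < e"
    using F(1) by blast
qed

lemma SS_sum: "finite T \<Longrightarrow> T \<subseteq> SS \<Longrightarrow> (\<Sum>s\<in>T. sm (c s) s) \<in> SS"
proof (induction T rule: finite_induct)
  case empty thus ?case using SS_zero by simp
next
  case (insert t T)
  hence "sm (c t) t \<in> SS" "(\<Sum>s\<in>T. sm (c s) s) \<in> SS" using SS_sm by auto
  thus ?case using insert SS_add by simp
qed

lemma SS_closed: "closure SS \<subseteq> SS"
proof
  fix x assume "x \<in> closure SS"
  hence cl: "\<forall>e>0. \<exists>y\<in>SS. dist y x < e" using closure_approachable by blast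
  show "x \<in> SS" unfolding SS_def
  proof (intro CollectI allI impI)
    fix e :: real assume e: "e > 0"
    have e2: "e/2 > 0" using e by simp
    obtain y where y: "y \<in> SS" "dist y x < e/2" using cl e2 by blast
    obtain y' F where F: "finite F" "act (indf F) y' = y'" "norm (y - y') < e/2"
      using y(1) e2 unfolding SS_def by blast
    have "x - y' = (x - y) + (y - y')" by simp
    hence "norm (x - y') \<le> norm (x - y) + norm (y - y')" by (metis norm_triangle_ineq)
    moreover have "norm (x - y) < e/2" using y(2) by (simp add: dist_norm norm_minus_commute)
    ultimately have "norm (x - y') < e" using F(3) by linarith
    thus "\<exists>x' F. finite F \<and> act (indf F) x' = x' \<and> norm (x - x') < e" using F by blast
  qed
qed

lemma dense_supp:
  assumes E: "essential_module A sm act" and e: "e > 0"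
  shows "\<exists>x' F. finite F \<and> act (indf F) x' = x' \<and> norm (x - x') < e"
proof -
  have "cspan sm {act a x | a x. a \<in> A} \<subseteq> SS"
  proof
    fix y assume "y \<in> cspan sm {act a x | a x. a \<in> A}"
    then obtain T c where T: "finite T" "T \<subseteq> {act a x | a x. a \<in> A}" "y = (\<Sum>s\<in>T. sm (c s) s)"
      unfolding cspan_def by blast
    have "T \<subseteq> SS" using T(2) SS_gen by blast
    thus "y \<in> SS" using SS_sum T by simp
  qed
  hence "closure (cspan sm {act a x | a x. a \<in> A}) \<subseteq> SS"
    using SS_closed closure_mono by blast
  hence "x \<in> SS" using E unfolding essential_module_def by blast
  thus ?thesis using e unfolding SS_def by blast
qed

end


locale cm =
  fixes A :: "(nat \<Rightarrow> complex) set" and nA :: "(nat \<Rightarrow> complex) \<Rightarrow> real"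
    and sm :: "complex \<Rightarrow> 'x::real_normed_vector \<Rightarrow> 'x"
    and act :: "(nat \<Rightarrow> complex) \<Rightarrow> 'x \<Rightarrow> 'x"
    and smY :: "complex \<Rightarrow> 'y::banach \<Rightarrow> 'y"
    and actY :: "(nat \<Rightarrow> complex) \<Rightarrow> 'y \<Rightarrow> 'y"
    and J :: "'x \<Rightarrow> 'y"
  assumes S: "seq_algebra A nA" and M: "normed_module A nA sm act"
    and hom: "homogeneous_module act"
    and mc: "module_completion A nA sm act smY actY J"

sublocale cm \<subseteq> X: gm A nA sm act using S M by unfold_locales
sublocale cm \<subseteq> Y: gm A nA smY actY using S mc unfolding module_completion_def by unfold_locales auto

context cm begin

lemma J_add: "J (x + y) = J x + J y" using mc unfolding module_completion_def by blast
lemma J_norm: "norm (J x) = norm x" using mc unfolding module_completion_def by blast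
lemma J_sm: "J (sm c x) = smY c (J x)" using mc unfolding module_completion_def by blast
lemma J_diff: "J (x - y) = J x - J y" using J_add[of "x - y" y] by (simp add: algebra_simps)
lemma J_act: "a \<in> A \<Longrightarrow> actY a (J x) = J (act a x)" using mc unfolding module_completion_def by blast
lemma J_dense: "closure (range J) = UNIV" using mc unfolding module_completion_def by blast

lemma J_approx: "e > 0 \<Longrightarrow> \<exists>x. norm (J x - y) < e"
proof -
  assume e: "e > 0"
  have "y \<in> closure (range J)" using J_dense by simp
  then obtain z where "z \<in> range J" "dist z y < e" using e closure_approachable by blast
  thus ?thesis by (auto simp: dist_norm)
qed

lemma coord_le: "norm (act (pvec n) u) \<le> norm (actY (pvec n) y) + norm (J u - y)"
proof -
  have "norm (act (pvec n) u) = norm (actY (pvec n) (J u))" using J_act[OF X.pvec_A] J_norm by simp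
  also have "actY (pvec n) (J u) = actY (pvec n) y + actY (pvec n) (J u - y)"
    using Y.act_diff[OF Y.pvec_A] by simp
  also have "norm \<dots> \<le> norm (actY (pvec n) y) + norm (actY (pvec n) (J u - y))" by (rule norm_triangle_ineq)
  also have "norm (actY (pvec n) (J u - y)) \<le> norm (J u - y)" by (rule Y.act_pvec_norm)
  finally show ?thesis by simp
qed

lemma fin_case:
  assumes F: "finite F" and ys: "actY (indf F) y = y"
    and dom: "\<And>n. norm (actY (pvec n) y) \<le> norm (actY (pvec n) z)"
  shows "norm y \<le> norm z"
proof (rule field_le_mult_one_interval)
  fix a :: real assume a0: "0 < a" and a1: "a < 1"
  define C where "C = 2 + 4 * real (card F) / (1 - a)"
  have aleq: "a * t \<le> t" if "t \<ge> 0" for t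
    using mult_left_le_one_le[of t a] that a0 a1 by simp
  have C: "C > 0" using a1 unfolding C_def by (simp add: add_pos_nonneg)
  have main: "a * norm y \<le> norm z + C * \<epsilon>" if \<epsilon>: "\<epsilon> > 0" for \<epsilon>
  proof -
    define K where "K = nA (indf F)"
    have K: "K \<ge> 0" unfolding K_def using Y.nA_nonneg[OF Y.indf_A[OF F]] .
    have "\<epsilon> / (K + 1) > 0" using \<epsilon> K by (intro divide_pos_pos) auto
    then obtain u0 where u0: "norm (J u0 - y) < \<epsilon> / (K + 1)" using J_approx by blast
    define u where "u = act (indf F) u0"
    have Ju: "J u = actY (indf F) (J u0)" unfolding u_def using J_act[OF X.indf_A[OF F]] by simp
    have "J u - y = actY (indf F) (J u0 - y)" using Ju ys Y.act_diff[OF Y.indf_A[OF F]] by simp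
    hence "norm (J u - y) \<le> K * norm (J u0 - y)" using Y.act_norm[OF Y.indf_A[OF F]] K_def by simp
    also have "\<dots> \<le> K * (\<epsilon> / (K + 1))" using u0 K by (intro mult_left_mono) auto
    also have "\<dots> = \<epsilon> * (K / (K + 1))" by simp
    also have "\<dots> < \<epsilon> * 1" using \<epsilon> frac_lt1[OF K] by (intro mult_strict_left_mono) auto
    finally have uy: "norm (J u - y) < \<epsilon>" by simp
    obtain w where wz: "norm (J w - z) < \<epsilon>" using J_approx \<epsilon> by blast
    have us: "act (indf F) u = u" unfolding u_def using X.act_indf_indf[OF F F] by simp
    have u_out: "act (pvec n) u = 0" if "n \<notin> F" for n
      using X.act_pvec_indf[OF F, of n u] us that by simp
    have cu: "norm (act (pvec n) u) \<le> norm (act (pvec n) w) + 2 * \<epsilon>" for n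
    proof -
      have "norm (act (pvec n) u) \<le> norm (actY (pvec n) y) + norm (J u - y)" by (rule coord_le)
      moreover have "norm (actY (pvec n) z) \<le> norm (act (pvec n) w) + norm (J w - z)"
      proof -
        have "norm (act (pvec n) w) = norm (actY (pvec n) (J w))" using J_act[OF X.pvec_A] J_norm by simp
        moreover have e1: "actY (pvec n) z = actY (pvec n) (J w) - actY (pvec n) (J w - z)"
          using Y.act_diff[OF Y.pvec_A] by simp
        moreover have "norm (actY (pvec n) z)
            \<le> norm (actY (pvec n) (J w)) + norm (actY (pvec n) (J w - z))" unfolding e1 by (rule norm_triangle_ineq4)
        moreover have "norm (actY (pvec n) (J w - z)) \<le> norm (J w - z)" by (rule Y.act_pvec_norm)
        ultimately show ?thesis by linarith
      qed
      ultimately show ?thesis using dom[of n] uy wz by linarith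
    qed
    define H where "H = {n \<in> F. norm (act (pvec n) w) < a * norm (act (pvec n) u)}"
    have H: "finite H" "H \<subseteq> F" unfolding H_def using F by auto
    have Hsmall: "norm (act (pvec n) u) \<le> 2 * \<epsilon> / (1 - a)" "norm (act (pvec n) w) \<le> 2 * \<epsilon> / (1 - a)"
      if "n \<in> H" for n
    proof -
      have lt: "norm (act (pvec n) w) < a * norm (act (pvec n) u)" using that H_def by simp
      have "(1 - a) * norm (act (pvec n) u) \<le> 2 * \<epsilon>" using cu[of n] lt by (simp add: algebra_simps)
      thus u: "norm (act (pvec n) u) \<le> 2 * \<epsilon> / (1 - a)" using a1 by (simp add: field_simps)
      have "a * norm (act (pvec n) u) \<le> norm (act (pvec n) u)" by (rule aleq) simp
      thus "norm (act (pvec n) w) \<le> 2 * \<epsilon> / (1 - a)" using u lt by linarith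
    qed
    define D where "D = real (card F) * (2 * \<epsilon> / (1 - a))"
    define w2 where "w2 = w - act (indf H) w + act (indf H) u"
    have cw2: "act (pvec n) w2 = (if n \<in> H then act (pvec n) u else act (pvec n) w)" for n
      unfolding w2_def using X.act_add[OF X.pvec_A] X.act_diff[OF X.pvec_A]
        X.act_pvec_indf[OF H(1)] by simp
    have "norm (a *\<^sub>R u) \<le> norm w2"
      using hom unfolding homogeneous_module_def
    proof (elim allE impE)
      show "\<forall>n. norm (act (pvec n) (a *\<^sub>R u)) \<le> norm (act (pvec n) w2)"
      proof
        fix n
        have l: "norm (act (pvec n) (a *\<^sub>R u)) = a * norm (act (pvec n) u)"
          using X.act_scaleR[OF X.pvec_A] a0 by simp
        show "norm (act (pvec n) (a *\<^sub>R u)) \<le> norm (act (pvec n) w2)"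
        proof (cases "n \<in> H")
          case True
          thus ?thesis using l cw2 aleq[of "norm (act (pvec n) u)"] by simp
        next
          case False
          show ?thesis
          proof (cases "n \<in> F")
            case True
            thus ?thesis using False l cw2 H_def by auto
          next
            case nF: False
            thus ?thesis using False l cw2 u_out by simp
          qed
        qed
      qed
    qed
    hence au: "a * norm u \<le> norm w2" using a0 by simp
    have "norm w2 \<le> norm w + norm (act (indf H) w) + norm (act (indf H) u)"
      unfolding w2_def using norm_triangle_ineq[of "w - act (indf H) w" "act (indf H) u"]
        norm_triangle_ineq4[of w "act (indf H) w"] by linarith
    moreover have "norm (act (indf H) w) \<le> D"
    proof -
      have "norm (act (indf H) w) \<le> (\<Sum>n\<in>H. norm (act (pvec n) w))" by (rule X.norm_act_indf[OF H(1)])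
      also have "\<dots> \<le> real (card H) * (2 * \<epsilon> / (1 - a))" using Hsmall(2) by (rule sum_bounded_above)
      also have "\<dots> \<le> real (card F) * (2 * \<epsilon> / (1 - a))"
        using card_mono[OF F H(2)] \<epsilon> a1 by (intro mult_right_mono) auto
      finally show ?thesis unfolding D_def .
    qed
    moreover have "norm (act (indf H) u) \<le> D"
    proof -
      have "norm (act (indf H) u) \<le> (\<Sum>n\<in>H. norm (act (pvec n) u))" by (rule X.norm_act_indf[OF H(1)])
      also have "\<dots> \<le> real (card H) * (2 * \<epsilon> / (1 - a))" using Hsmall(1) by (rule sum_bounded_above)
      also have "\<dots> \<le> real (card F) * (2 * \<epsilon> / (1 - a))"
        using card_mono[OF F H(2)] \<epsilon> a1 by (intro mult_right_mono) auto
      finally show ?thesis unfolding D_def .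
    qed
    moreover have "norm w \<le> norm z + \<epsilon>"
      using J_norm[of w] norm_triangle_ineq2[of "J w" z] wz by linarith
    moreover have "norm y \<le> norm u + \<epsilon>"
      using J_norm[of u] norm_triangle_ineq3[of y "J u"] uy by (simp add: norm_minus_commute)
    moreover have "a * norm y \<le> a * norm u + a * \<epsilon>"
      using mult_left_mono[OF calculation(5), of a] a0 by (simp add: distrib_left)
    moreover have "a * \<epsilon> \<le> \<epsilon>" using a1 \<epsilon> by simp
    moreover have "C * \<epsilon> = 2 * \<epsilon> + 2 * D"
      unfolding C_def D_def using a1 by (simp add: field_simps)
    ultimately show ?thesis using au by linarith
  qed
  show "a * norm y \<le> norm z"
  proof (rule field_le_epsilon)
    fix e :: real assume e: "0 < e"
    have "a * norm y \<le> norm z + C * (e / C)" using main[of "e / C"] e C by simp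
    thus "a * norm y \<le> norm z + e" using C by simp
  qed
qed

lemma trunc_le: "finite F \<Longrightarrow> norm (actY (indf F) y) \<le> norm y"
  by (rule fin_case) (auto simp: Y.act_indf_indf Y.act_pvec_indf)

lemma hom_Y: assumes E: "essential_module A sm act" shows "homogeneous_module actY"
  unfolding homogeneous_module_def
proof (intro allI impI)
  fix y z assume dom: "\<forall>n. norm (actY (pvec n) y) \<le> norm (actY (pvec n) z)"
  show "norm y \<le> norm z"
  proof (rule field_le_epsilon)
    fix e :: real assume e: "0 < e"
    have e4: "e/4 > 0" using e by simp
    obtain x where x: "norm (J x - y) < e/4" using J_approx[OF e4] by blast
    obtain x' F where F: "finite F" "act (indf F) x' = x'" "norm (x - x') < e/4"
      using X.dense_supp[OF E e4] by blast
    define v where "v = J x'"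
    have vs: "actY (indf F) v = v" unfolding v_def using J_act[OF X.indf_A[OF F(1)]] F(2) by simp
    have "y - v = (y - J x) + J (x - x')" unfolding v_def by (simp add: J_diff)
    hence "norm (y - v) \<le> norm (y - J x) + norm (J (x - x'))" by (subst \<open>y - v = _\<close>) (rule norm_triangle_ineq)
    hence yv: "norm (y - v) < e/2" using x F(3) J_norm[of "x - x'"] by (simp add: norm_minus_commute)
    define yF where "yF = actY (indf F) y"
    have "norm yF \<le> norm z"
    proof (rule fin_case[OF F(1)])
      show "actY (indf F) yF = yF" unfolding yF_def using Y.act_indf_indf[OF F(1) F(1)] by simp
      fix n show "norm (actY (pvec n) yF) \<le> norm (actY (pvec n) z)"
        unfolding yF_def using Y.act_pvec_indf[OF F(1)] dom by simp
    qed
    moreover have "norm (yF - v) \<le> norm (y - v)"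
    proof -
      have "actY (indf F) (y - v) = yF - v" unfolding yF_def using Y.act_diff[OF Y.indf_A[OF F(1)]] vs by simp
      thus ?thesis using trunc_le[OF F(1), of "y - v"] by simp
    qed
    moreover have "norm y = norm ((y - v) - (yF - v) + yF)" by simp
    hence "norm y \<le> norm (y - v) + norm (yF - v) + norm yF"
      using norm_triangle_ineq[of "(y - v) - (yF - v)" yF] norm_triangle_ineq4[of "y - v" "yF - v"] by linarith
    ultimately show "norm y \<le> norm z + e" using yv by linarith
  qed
qed

lemma J_zero: "J 0 = 0" using J_add[of 0 0] by simp

lemma J_sum: "finite T \<Longrightarrow> J (\<Sum>s\<in>T. sm (c s) s) = (\<Sum>s\<in>T. smY (c s) (J s))"
  by (induction T rule: finite_induct) (simp_all add: J_zero J_add J_sm)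

lemma J_inj: "inj J"
proof (rule injI)
  fix x y assume "J x = J y"
  hence "norm (J (x - y)) = 0" by (simp add: J_diff)
  thus "x = y" using J_norm by simp
qed

lemma J_cspan: assumes "x \<in> cspan sm {act a x | a x. a \<in> A}"
  shows "J x \<in> cspan smY {actY a y | a y. a \<in> A}"
proof -
  obtain T c where T: "finite T" "T \<subseteq> {act a x | a x. a \<in> A}" "x = (\<Sum>s\<in>T. sm (c s) s)"
    using assms unfolding cspan_def by blast
  have "J x = (\<Sum>s\<in>T. smY (c s) (J s))" using J_sum T by simp
  also have "\<dots> = (\<Sum>t\<in>J ` T. smY (c (inv_into T J t)) t)"
  proof -
    have i: "inj_on J T" by (rule inj_on_subset[OF J_inj]) simp
    have "(\<Sum>t\<in>J ` T. smY (c (inv_into T J t)) t) = (\<Sum>s\<in>T. smY (c (inv_into T J (J s))) (J s))"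
      by (rule sum.reindex[OF i, unfolded comp_def])
    also have "\<dots> = (\<Sum>s\<in>T. smY (c s) (J s))" by (intro sum.cong refl) (simp add: inv_into_f_f[OF i])
    finally show ?thesis by simp
  qed
  finally have eq: "J x = (\<Sum>t\<in>J ` T. smY (c (inv_into T J t)) t)" .
  have "J ` T \<subseteq> {actY a y | a y. a \<in> A}"
  proof
    fix t assume "t \<in> J ` T"
    then obtain s where s: "s \<in> T" "t = J s" by blast
    then obtain a x where ax: "a \<in> A" "s = act a x" using T(2) by blast
    hence "t = actY a (J x)" using s J_act by simp
    thus "t \<in> {actY a y | a y. a \<in> A}" using ax by blast
  qed
  hence "finite (J ` T) \<and> J ` T \<subseteq> {actY a y | a y. a \<in> A} \<and>
     J x = (\<Sum>t\<in>J ` T. smY ((\<lambda>t. c (inv_into T J t)) t) t)" using eq T(1) by simp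
  thus ?thesis unfolding cspan_def by (intro CollectI exI[of _ "J ` T"] exI[of _ "\<lambda>t. c (inv_into T J t)"])
qed

lemma ess_Y: assumes E: "essential_module A sm act" shows "essential_module A smY actY"
proof -
  let ?CX = "cspan sm {act a x | a x. a \<in> A}"
  let ?CY = "cspan smY {actY a y | a y. a \<in> A}"
  have "range J \<subseteq> closure ?CY"
  proof
    fix y assume "y \<in> range J"
    then obtain x where y: "y = J x" by blast
    have "x \<in> closure ?CX" using E unfolding essential_module_def by simp
    hence cx: "\<forall>e>0. \<exists>s\<in>?CX. dist s x < e" using closure_approachable by blast
    have "\<forall>e>0. \<exists>t\<in>?CY. dist t y < e"
    proof (intro allI impI)
      fix e :: real assume "e > 0"
      then obtain s where s: "s \<in> ?CX" "dist s x < e" using cx by blast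
      have d: "dist (J s) y = dist s x" unfolding y dist_norm by (simp add: J_diff[symmetric] J_norm)
      show "\<exists>t\<in>?CY. dist t y < e"
        by (rule bexI[of _ "J s"]) (use d s(2) J_cspan[OF s(1)] in simp_all)
    qed
    thus "y \<in> closure ?CY" using closure_approachable by blast
  qed
  hence "closure (range J) \<subseteq> closure (closure ?CY)" by (rule closure_mono)
  hence "closure (range J) \<subseteq> closure ?CY" by simp
  thus ?thesis unfolding essential_module_def using J_dense by blast
qed

end
theorem proposition1p6:
  fixes A :: "(nat \<Rightarrow> complex) set" and nA :: "(nat \<Rightarrow> complex) \<Rightarrow> real"
    and sm :: "complex \<Rightarrow> 'x::real_normed_vector \<Rightarrow> 'x"
    and act :: "(nat \<Rightarrow> complex) \<Rightarrow> 'x \<Rightarrow> 'x"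
    and smY :: "complex \<Rightarrow> 'y::banach \<Rightarrow> 'y"
    and actY :: "(nat \<Rightarrow> complex) \<Rightarrow> 'y \<Rightarrow> 'y"
    and J :: "'x \<Rightarrow> 'y"
  assumes "seq_algebra A nA"
    and "normed_module A nA sm act"
    and "essential_module A sm act"
    and "homogeneous_module act"
    and "module_completion A nA sm act smY actY J"
  shows "essential_module A smY actY \<and> homogeneous_module actY"
  proof -
  interpret cm A nA sm act smY actY J using assms by unfold_locales
  show ?thesis using ess_Y[OF assms(3)] hom_Y[OF assms(3)] by blast
qed

end
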